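(* Let $s_k, y_k \in \mathbb{R}^n$ be vectors with $y_k^{T}s_k \neq 0$, and define $$H_{k+1} = I - \frac{y_k s_k^{T} + s_k y_k^{T}}{y_k^{T}s_k} + 2\,\frac{y_k^{T}y_k}{(y_k^{T}s_k)^2}\, s_k s_k^{T}.$$ Then $H_{k+1}$ is symmetric positive definite and all of its eigenvalues are greater than $1/2$.
   Context: $I$ denotes the $n\times n$ identity matrix and $\|\cdot\|$ the Euclidean norm. In the paper, $s_k = x_{k+1}-x_k$ and $y_k = \nabla f(x_{k+1}) - \nabla f(x_k)$, but the claim is purely algebraic in $s_k, y_k$. *)

theory Defs
  imports "HOL-Analysis.Analysis"
begin

definition outer :: "real^'n \<Rightarrow> real^'n \<Rightarrow> real^'n^'n" where
  "outer u v = (\<chi> i j. u $ i * v $ j)"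

definition Hnext :: "real^'n \<Rightarrow> real^'n \<Rightarrow> real^'n^'n" where
  "Hnext s y = mat 1 - (1 / (y \<bullet> s)) *\<^sub>R (outer y s + outer s y)
      + (2 * (y \<bullet> y) / (y \<bullet> s)^2) *\<^sub>R outer s s"

definition symmetric_matrix :: "real^'n^'n \<Rightarrow> bool" where
  "symmetric_matrix A \<longleftrightarrow> transpose A = A"

definition pos_def :: "real^'n^'n \<Rightarrow> bool" where
  "pos_def A \<longleftrightarrow> symmetric_matrix A \<and> (\<forall>x. x \<noteq> 0 \<longrightarrow> x \<bullet> (A *v x) > 0)"

definition is_eigenvalue :: "real^'n^'n \<Rightarrow> real \<Rightarrow> bool" where
  "is_eigenvalue A c \<longleftrightarrow> (\<exists>v. v \<noteq> 0 \<and> A *v v = c *\<^sub>R v)"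

end

theory Submission
  imports Defs
begin

lemma outer_mult: "outer u v *v x = (v \<bullet> x) *\<^sub>R u"
  by (simp add: vec_eq_iff outer_def matrix_vector_mult_def inner_vec_def
      sum_distrib_left sum_distrib_right mult.commute mult.left_commute)

lemma outer_transpose: "transpose (outer u v) = outer v u"
  by (simp add: vec_eq_iff outer_def transpose_def)

lemma smult_mv: "((k::real) *\<^sub>R (A::real^'n^'m)) *v x = k *\<^sub>R (A *v x)"
  by (rule scaleR_matrix_vector_assoc[symmetric])

lemma add_mv: "((A::real^'n^'m) + B) *v x = A *v x + B *v x"
  by (rule matrix_vector_mult_add_rdistrib)

lemma diff_mv: "((A::real^'n^'m) - B) *v x = A *v x - B *v x"
  by (rule matrix_vector_mult_diff_rdistrib)

lemma H_mult: "Hnext s y *v x = x - (1 / (y \<bullet> s)) *\<^sub>R ((s \<bullet> x) *\<^sub>R y + (y \<bullet> x) *\<^sub>R s)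
   + (2 * (y \<bullet> y) / (y \<bullet> s)^2) *\<^sub>R ((s \<bullet> x) *\<^sub>R s)"
  unfolding Hnext_def
  by (simp add: add_mv diff_mv smult_mv outer_mult scaleR_add_right)

lemma H_quad:
  assumes a: "y \<bullet> s \<noteq> 0" and x: "x \<noteq> 0"
  shows "x \<bullet> (Hnext s y *v x) > (x \<bullet> x) / 2"
proof -
  define a where "a = y \<bullet> s"
  define t where "t = (s \<bullet> x) / a"
  have an: "a \<noteq> 0" using a a_def by simp
  have a1: "y \<bullet> s = a" "s \<bullet> y = a" by (simp_all add: a_def inner_commute)
  have e1: "x \<bullet> (Hnext s y *v x) = x \<bullet> x - (1/a) * (2*(s \<bullet> x)*(y \<bullet> x)) + 2*(y \<bullet> y)/a^2*(s \<bullet> x)^2"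
  proof -
    have c1: "x \<bullet> y = y \<bullet> x" "x \<bullet> s = s \<bullet> x" by (simp_all add: inner_commute)
    have "x \<bullet> (Hnext s y *v x) = x \<bullet> x - (1/a) * ((s \<bullet> x) * (x \<bullet> y) + (y \<bullet> x) * (x \<bullet> s))
        + (2 * (y \<bullet> y) / a^2) * ((s \<bullet> x) * (x \<bullet> s))"
      by (simp only: H_mult a1 inner_diff_right inner_add_right inner_scaleR_right)
    also have "\<dots> = x \<bullet> x - (1/a) * (2*(s \<bullet> x)*(y \<bullet> x)) + 2*(y \<bullet> y)/a^2*(s \<bullet> x)^2"
      unfolding c1 by (simp add: power2_eq_square)
    finally show ?thesis .
  qed
  have e2: "(x - (2*t) *\<^sub>R y) \<bullet> (x - (2*t) *\<^sub>R y) = x \<bullet> x - 4*t*(y \<bullet> x) + 4*t^2*(y \<bullet> y)"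
    by (simp add: inner_diff_right inner_diff_left inner_commute power2_eq_square algebra_simps)
  have e3: "(1/a) * (2*(s \<bullet> x)*(y \<bullet> x)) = 2*t*(y \<bullet> x)" by (simp add: t_def)
  have e4: "2*(y \<bullet> y)/a^2*(s \<bullet> x)^2 = 2*t^2*(y \<bullet> y)" by (simp add: t_def power_divide)
  have eq: "x \<bullet> (Hnext s y *v x) = (x \<bullet> x) / 2 + (1/2) * ((x - (2*t) *\<^sub>R y) \<bullet> (x - (2*t) *\<^sub>R y))"
    unfolding e1 e2 e3 e4 by (simp add: algebra_simps)
  have "x - (2*t) *\<^sub>R y \<noteq> 0"
  proof
    assume h: "x - (2*t) *\<^sub>R y = 0"
    hence "x = (2*t) *\<^sub>R y" by simp
    hence "s \<bullet> x = 2*t*a" by (simp add: a_def inner_commute)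
    hence "s \<bullet> x = 2 * (s \<bullet> x)" using an by (simp add: t_def)
    hence "t = 0" by (simp add: t_def)
    with h x show False by simp
  qed
  hence "(x - (2*t) *\<^sub>R y) \<bullet> (x - (2*t) *\<^sub>R y) > 0" by simp
  thus ?thesis using eq by simp
qed

theorem lemma1:
  fixes s y :: "real^'n"
  assumes "y \<bullet> s \<noteq> 0"
  shows "symmetric_matrix (Hnext s y) \<and> pos_def (Hnext s y)
         \<and> (\<forall>c. is_eigenvalue (Hnext s y) c \<longrightarrow> c > 1/2)"
proof -
  have sym: "symmetric_matrix (Hnext s y)"
    unfolding symmetric_matrix_def Hnext_def
    by (simp add: vec_eq_iff transpose_def outer_def mult.commute mat_def)
  have pd: "pos_def (Hnext s y)"
    unfolding pos_def_def
  proof (intro conjI sym allI impI)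
    fix x :: "real^'n" assume "x \<noteq> 0"
    have "x \<bullet> x > 0" using \<open>x \<noteq> 0\<close> by simp
    with H_quad[OF assms \<open>x \<noteq> 0\<close>] show "x \<bullet> (Hnext s y *v x) > 0"
      by linarith
  qed
  have ev: "\<forall>c. is_eigenvalue (Hnext s y) c \<longrightarrow> c > 1/2"
  proof (intro allI impI)
    fix c assume "is_eigenvalue (Hnext s y) c"
    then obtain v where v: "v \<noteq> 0" "Hnext s y *v v = c *\<^sub>R v" unfolding is_eigenvalue_def by blast
    from H_quad[OF assms v(1)] v(2) have "c * (v \<bullet> v) > (v \<bullet> v) / 2" by simp
    moreover have "v \<bullet> v > 0" using v(1) by simp
    ultimately have "(c - 1/2) * (v \<bullet> v) > 0" "v \<bullet> v > 0" by (simp_all add: algebra_simps)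
    thus "c > 1/2" by (simp add: zero_less_mult_iff)
  qed
  show ?thesis using sym pd ev by blast
qed

end
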